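(* In the setting described in the context, let $G\in R_w$ and $H\in R_z$ ($w,z\in\mathbb{Z}^n_{\ge0}$) be coprime polynomials in $\mathbb{K}[x_1,\dots,x_n][y]$. If $G$ is monic with respect to $y$, then for every $i\in M$ one has $G\,R_{z+i}+H\,R_{w+i}=R_{w+z+i}$.
   Context: Let $\mathbb{K}$ be a field and consider the polynomial ring $\mathbb{K}[x_1,\dots,x_n][y]$ in $n+1$ variables, monomials $\underline x^\alpha y^j$ identified with exponents in $\mathbb{Z}^{n+1}_{\ge0}$. A Newton polyhedron in $\mathbb{R}^{n+1}_{\ge0}$ is the convex hull of $S+\mathbb{R}^{n+1}_{\ge0}$ for a nonempty finite $S\subset\mathbb{Z}^{n+1}_{\ge0}$; for $\xi\in\mathbb{R}^{n+1}_{\ge0}$ the face $\Delta^\xi=\{a\in\Delta:\langle\xi,a\rangle=\min_{b\in\Delta}\langle\xi,b\rangle\}$ is compact iff $\xi\in\mathbb{R}^{n+1}_{>0}$; a loose edge is a compact 1-dimensional face not contained in any compact face of dimension $\ge2$; a segment is descendant if it is parallel to a vector $(c_1,\dots,c_{n+1})$ with $c_i\ge0$ for $i\le n$ and $c_{n+1}<0$. Let $\Delta\subset\mathbb{R}^{n+1}_{\ge0}$ be a Newton polyhedron with a loose descendant edge $E$, let $c\in\mathbb{Z}^{n+1}$ be a primitive lattice vector parallel to $E$, and let $\xi_1,\dots,\xi_n\in\mathbb{Z}^{n+1}_{\ge0}$ be linearly independent with $\langle\xi_i,c\rangle=0$. For $\gamma\in\mathbb{Z}^{n+1}$ define the weight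 $\omega$ of the corresponding monomial as $(\langle\xi_1,\gamma\rangle,\dots,\langle\xi_n,\gamma\rangle)\in\mathbb{Z}^n$. For $w\in\mathbb{Z}^n_{\ge0}$ let $R_w\subset\mathbb{K}[x_1,\dots,x_n,y]$ be the $\mathbb{K}$-span of monomials with exponent in $\mathbb{Z}^{n+1}_{\ge0}$ of weight $w$. Let $M$ be the set of $z\in\mathbb{Z}^n_{\ge0}$ for which there is $\gamma\in\mathbb{Z}^{n+1}$ of weight $z$ with $\langle\xi,\gamma\rangle\ge0$ for all $\xi\in\mathbb{R}^{n+1}_{\ge0}$ orthogonal to $E$. *)

theory Defs
  imports "HOL-Analysis.Analysis" "HOL-Library.Poly_Mapping"
begin

(* Variables of K[x_1..x_n][y] are indexed by a finite type 'm; a distinguished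
   element y :: 'm is the variable y, the others are x_1..x_n; so n = CARD('m) - 1.
   Exponent vectors live in Z^{n+1} = int^'m, real points in R^{n+1} = real^'m. *)

definition rvec :: "int ^ 'm \<Rightarrow> real ^ 'm" where
  "rvec v = (\<chi> j. real_of_int (v $ j))"

definition iinner :: "int ^ 'm::finite \<Rightarrow> int ^ 'm \<Rightarrow> int" where
  "iinner a b = (\<Sum>j\<in>UNIV. a $ j * b $ j)"

definition expvec :: "('m \<Rightarrow>\<^sub>0 nat) \<Rightarrow> int ^ 'm" where
  "expvec e = (\<chi> j. int (Poly_Mapping.lookup e j))"

definition nonneg_orthant :: "(real ^ 'm) set" where
  "nonneg_orthant = {v. \<forall>j. 0 \<le> v $ j}"

definition newton_polyhedron :: "(real ^ 'm::finite) set \<Rightarrow> bool" where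
  "newton_polyhedron \<Delta> \<longleftrightarrow>
     (\<exists>S. finite S \<and> S \<noteq> {} \<and> (\<forall>s\<in>S. \<forall>j. s $ j \<in> \<int> \<and> 0 \<le> s $ j) \<and>
          \<Delta> = convex hull {s + v | s v. s \<in> S \<and> v \<in> nonneg_orthant})"

definition face_of_wt :: "(real ^ 'm::finite) set \<Rightarrow> real ^ 'm \<Rightarrow> (real ^ 'm) set" where
  "face_of_wt \<Delta> \<xi> = {a\<in>\<Delta>. \<xi> \<bullet> a = (INF b\<in>\<Delta>. \<xi> \<bullet> b)}"

definition compact_face :: "(real ^ 'm::finite) set \<Rightarrow> (real ^ 'm) set \<Rightarrow> bool" where
  "compact_face \<Delta> F \<longleftrightarrow> (\<exists>\<xi>\<in>nonneg_orthant. F = face_of_wt \<Delta> \<xi>) \<and> compact F"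

definition loose_edge :: "(real ^ 'm::finite) set \<Rightarrow> (real ^ 'm) set \<Rightarrow> bool" where
  "loose_edge \<Delta> E \<longleftrightarrow> compact_face \<Delta> E \<and> aff_dim E = 1 \<and>
     \<not> (\<exists>F. compact_face \<Delta> F \<and> aff_dim F \<ge> 2 \<and> E \<subseteq> F)"

definition parallel_to :: "(real ^ 'm::finite) set \<Rightarrow> real ^ 'm \<Rightarrow> bool" where
  "parallel_to E d \<longleftrightarrow> d \<noteq> 0 \<and> (\<forall>a\<in>E. \<forall>b\<in>E. \<exists>t::real. b - a = t *\<^sub>R d)"

definition descendant :: "'m \<Rightarrow> (real ^ 'm::finite) set \<Rightarrow> bool" where
  "descendant y E \<longleftrightarrow> (\<exists>d. parallel_to E d \<and> (\<forall>j. j \<noteq> y \<longrightarrow> 0 \<le> d $ j) \<and> d $ y < 0)"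

definition primitive_lattice :: "int ^ 'm::finite \<Rightarrow> bool" where
  "primitive_lattice c \<longleftrightarrow> c \<noteq> 0 \<and> (\<forall>k::int. (\<forall>j. k dvd c $ j) \<longrightarrow> is_unit k)"

definition weight :: "nat \<Rightarrow> (nat \<Rightarrow> int ^ 'm::finite) \<Rightarrow> int ^ 'm \<Rightarrow> (nat \<Rightarrow> int)" where
  "weight n \<xi> \<gamma> = (\<lambda>i. if i < n then iinner (\<xi> i) \<gamma> else 0)"

definition nonneg_weights :: "nat \<Rightarrow> (nat \<Rightarrow> int) set" where
  "nonneg_weights n = {w. \<forall>i. (i < n \<longrightarrow> 0 \<le> w i) \<and> (n \<le> i \<longrightarrow> w i = 0)}"

definition wadd :: "(nat \<Rightarrow> int) \<Rightarrow> (nat \<Rightarrow> int) \<Rightarrow> (nat \<Rightarrow> int)" where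
  "wadd a b = (\<lambda>i. a i + b i)"

definition Rw :: "nat \<Rightarrow> (nat \<Rightarrow> int ^ 'm::finite) \<Rightarrow> (nat \<Rightarrow> int) \<Rightarrow> (('m \<Rightarrow>\<^sub>0 nat) \<Rightarrow>\<^sub>0 'k::field) set" where
  "Rw n \<xi> w = {P. \<forall>e\<in>Poly_Mapping.keys P. weight n \<xi> (expvec e) = w}"

definition Mset :: "nat \<Rightarrow> (nat \<Rightarrow> int ^ 'm::finite) \<Rightarrow> int ^ 'm \<Rightarrow> (nat \<Rightarrow> int) set" where
  "Mset n \<xi> c = {z \<in> nonneg_weights n. \<exists>\<gamma>::int ^ 'm. weight n \<xi> \<gamma> = z \<and>
       (\<forall>\<eta>\<in>nonneg_orthant. \<eta> \<bullet> rvec c = 0 \<longrightarrow> 0 \<le> \<eta> \<bullet> rvec \<gamma>)}"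

definition coprime_poly :: "'a::comm_semiring_1 \<Rightarrow> 'a \<Rightarrow> bool" where
  "coprime_poly G H \<longleftrightarrow> (\<forall>C. C dvd G \<longrightarrow> C dvd H \<longrightarrow> C dvd 1)"

(* monic with respect to y: the coefficient (in K[x]) of the highest power of y is 1 *)
definition monic_in :: "'m \<Rightarrow> (('m \<Rightarrow>\<^sub>0 nat) \<Rightarrow>\<^sub>0 'k::field) \<Rightarrow> bool" where
  "monic_in y G \<longleftrightarrow> (\<exists>d. Poly_Mapping.lookup G (Poly_Mapping.single y d) = 1 \<and>
     (\<forall>e\<in>Poly_Mapping.keys G. Poly_Mapping.lookup e y \<le> d \<and> (Poly_Mapping.lookup e y = d \<longrightarrow> e = Poly_Mapping.single y d)))"

end

theory Submission
  imports Defs "HOL-Computational_Algebra.Polynomial"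
begin


lemma nat_mod_eq_int: "(a::nat) mod C = b mod C \<longleftrightarrow> (int C) dvd (int a - int b)"
proof -
  have "(a mod C = b mod C) \<longleftrightarrow> (int a mod int C = int b mod int C)"
    by (metis of_nat_eq_iff zmod_int)
  also have "\<dots> \<longleftrightarrow> int C dvd (int a - int b)" by (simp add: mod_eq_dvd_iff)
  finally show ?thesis .
qed

lemma coprime_of_bez:
  fixes a b :: "'k::field poly"
  assumes "u * a + v * b = 1" shows "coprime a b"
proof (rule coprimeI)
  fix c assume "c dvd a" "c dvd b"
  then have "c dvd u * a + v * b" by simp
  then show "is_unit c" using assms by simp
qed

lemma bez_of_coprime:
  fixes a b :: "'k::field poly"
  assumes cop: "coprime a b" shows "\<exists>u v. u * a + v * b = 1"
proof -
  define S where "S = {p. p \<noteq> 0 \<and> (\<exists>u v. p = u * a + v * b)}"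
  have "a \<noteq> 0 \<or> b \<noteq> 0"
  proof (rule ccontr)
    assume "\<not> ?thesis"
    then have "coprime (0::'k poly) 0" using cop by simp
    then show False by simp
  qed
  then have "S \<noteq> {}"
  proof
    assume "a \<noteq> 0"
    moreover have "a = 1 * a + 0 * b" by simp
    ultimately have "a \<in> S" unfolding S_def by blast
    then show ?thesis by blast
  next
    assume "b \<noteq> 0"
    moreover have "b = 0 * a + 1 * b" by simp
    ultimately have "b \<in> S" unfolding S_def by blast
    then show ?thesis by blast
  qed
  then obtain p0 where "p0 \<in> S" by blast
  define k where "k = (LEAST k. \<exists>p\<in>S. degree p = k)"
  have "\<exists>p\<in>S. degree p = k" unfolding k_def by (rule LeastI[of _ "degree p0"]) (use \<open>p0 \<in> S\<close> in blast)
  then obtain p where pS: "p \<in> S" and pk: "degree p = k" by blast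
  have min: "\<And>q. q \<in> S \<Longrightarrow> k \<le> degree q" unfolding k_def by (rule Least_le) blast
  from pS obtain u v where p: "p = u * a + v * b" and p0: "p \<noteq> 0" unfolding S_def by blast
  have dv: "p dvd x" if "x = u' * a + v' * b" for x u' v'
  proof (rule ccontr)
    assume nd: "\<not> p dvd x"
    then have m0: "x mod p \<noteq> 0" by (simp add: mod_eq_0_iff_dvd)
    have "x mod p = x - (x div p) * p" by (simp add: minus_div_mult_eq_mod)
    also have "\<dots> = (u' - (x div p) * u) * a + (v' - (x div p) * v) * b"
      by (simp add: that p algebra_simps)
    finally have "x mod p \<in> S" using m0 unfolding S_def by blast
    then have "k \<le> degree (x mod p)" by (rule min)
    moreover have "degree (x mod p) < degree p" using degree_mod_less[OF p0] m0 by blast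
    ultimately show False using pk by simp
  qed
  have "p dvd a" by (rule dv[of _ 1 0]) simp
  moreover have "p dvd b" by (rule dv[of _ 0 1]) simp
  ultimately have "is_unit p" using cop by (meson coprime_common_divisor)
  then obtain q where "1 = p * q" by (auto elim: dvdE)
  then have "(q * u) * a + (q * v) * b = 1" by (simp add: p algebra_simps)
  then show ?thesis by blast
qed

lemma coeff_pcompose_monom:
  fixes q :: "'k::field poly"
  assumes "C > 0"
  shows "coeff (pcompose q (monom 1 C)) j = (if C dvd j then coeff q (j div C) else 0)"
  using assms
proof (induction q arbitrary: j rule: pCons_induct)
  case 0 then show ?case by simp
next
  case (pCons a q)
  have "coeff (pcompose (pCons a q) (monom 1 C)) j
      = coeff [:a:] j + coeff (monom 1 C * pcompose q (monom 1 C)) j"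
    by (simp add: pcompose_pCons)
  also have "\<dots> = (if j = 0 then a else 0) + (if j < C then 0 else coeff (pcompose q (monom 1 C)) (j - C))"
    by (simp add: coeff_monom_mult coeff_pCons split: nat.splits)
  also have "\<dots> = (if C dvd j then coeff (pCons a q) (j div C) else 0)"
  proof (cases "j = 0")
    case True then show ?thesis using pCons.prems by simp
  next
    case False
    show ?thesis
    proof (cases "j < C")
      case True
      then have "\<not> C dvd j" using False by (meson dvd_imp_le not_gr0 not_le)
      then show ?thesis using True False by simp
    next
      case jC: False
      have e: "C dvd (j - C) \<longleftrightarrow> C dvd j" using jC by (simp add: dvd_minus_self)
      have "j div C = Suc ((j - C) div C)" using jC pCons.prems
        using le_div_geq[of C j] by simp
      then show ?thesis using pCons.IH[OF pCons.prems, of "j - C"] jC False e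
        by (simp add: coeff_pCons)
    qed
  qed
  finally show ?case .
qed

lemma decomp_class:
  fixes p :: "'k::field poly"
  assumes C: "C > 0" and r: "r < C" and cl: "\<forall>k. coeff p k \<noteq> 0 \<longrightarrow> k mod C = r"
  shows "\<exists>q. p = monom 1 r * pcompose q (monom 1 C)"
proof -
  define q where "q = Poly (map (\<lambda>k. coeff p (r + k * C)) [0..<Suc (degree p)])"
  have cq: "coeff q k = coeff p (r + k * C)" for k
  proof (cases "k < Suc (degree p)")
    case True then show ?thesis by (simp add: q_def nth_default_def del: upt_Suc)
  next
    case False
    then have "degree p < r + k * C" using C
      by (metis add.commute less_eq_Suc_le mult_le_mono2 mult.right_neutral not_less order.strict_trans2 trans_less_add1 less_one linorder_neqE_nat Suc_leI mult.commute)
    then show ?thesis using False by (simp add: q_def nth_default_def coeff_eq_0)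
  qed
  have "coeff p j = coeff (monom 1 r * pcompose q (monom 1 C)) j" for j
  proof -
    have rhs: "coeff (monom 1 r * pcompose q (monom 1 C)) j =
       (if j < r then 0 else (if C dvd (j - r) then coeff p (r + ((j - r) div C) * C) else 0))"
      by (simp add: coeff_monom_mult coeff_pcompose_monom[OF C] cq)
    show ?thesis
    proof (cases "coeff p j = 0")
      case True
      have "coeff p (r + ((j - r) div C) * C) = 0" if "r \<le> j" "C dvd (j - r)"
        using that True by (metis add_diff_inverse_nat dvd_div_mult_self not_less)
      then show ?thesis using rhs True by auto
    next
      case False
      then have jm: "j mod C = r" using cl by blast
      then have "r \<le> j" by (metis mod_less_eq_dividend)
      moreover have "C dvd (j - r)" using jm by (metis minus_mod_eq_mult_div dvd_triv_left mult.commute)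
      ultimately show ?thesis using rhs by (simp add: dvd_div_mult_self)
    qed
  qed
  then show ?thesis by (intro exI[of _ q] poly_eqI) simp
qed

definition proj :: "nat \<Rightarrow> nat \<Rightarrow> 'k::field poly \<Rightarrow> 'k poly" where
  "proj C a p = (\<Sum>k\<le>degree p. monom (if k mod C = a mod C then coeff p k else 0) k)"

lemma coeff_proj: "coeff (proj C a p) j = (if j mod C = a mod C then coeff p j else 0)"
proof -
  have "coeff (proj C a p) j = (\<Sum>k\<le>degree p. if k = j then (if k mod C = a mod C then coeff p k else 0) else 0)"
    unfolding proj_def by (simp add: coeff_sum coeff_monom)
  also have "\<dots> = (if j \<le> degree p then (if j mod C = a mod C then coeff p j else 0) else 0)"
    by (simp add: sum.delta')
  also have "\<dots> = (if j mod C = a mod C then coeff p j else 0)"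
    by (auto simp: coeff_eq_0)
  finally show ?thesis .
qed

lemma proj_add: "proj C a (p + q) = proj C a p + proj C a q"
  by (rule poly_eqI) (simp add: coeff_proj)

lemma proj_cong: "a mod C = b mod C \<Longrightarrow> proj C a p = proj C b p"
  by (rule poly_eqI) (simp add: coeff_proj)

lemma proj_id: "\<forall>k. coeff p k \<noteq> 0 \<longrightarrow> k mod C = a mod C \<Longrightarrow> proj C a p = p"
  by (rule poly_eqI) (auto simp add: coeff_proj)

lemma proj_mult:
  fixes g p :: "'k::field poly"
  assumes gcl: "\<forall>i. coeff g i \<noteq> 0 \<longrightarrow> i mod C = \<delta> mod C"
  shows "proj C (a + \<delta>) (g * p) = g * proj C a p"
proof (rule poly_eqI)
  fix n
  have "coeff (g * proj C a p) n = (\<Sum>i\<le>n. coeff g i * (if (n - i) mod C = a mod C then coeff p (n - i) else 0))"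
    by (simp add: coeff_mult coeff_proj)
  also have "\<dots> = (\<Sum>i\<le>n. if n mod C = (a + \<delta>) mod C then coeff g i * coeff p (n - i) else 0)"
  proof (rule sum.cong[OF refl])
    fix i assume i: "i \<in> {..n}"
    show "coeff g i * (if (n - i) mod C = a mod C then coeff p (n - i) else 0) =
          (if n mod C = (a + \<delta>) mod C then coeff g i * coeff p (n - i) else 0)"
    proof (cases "coeff g i = 0")
      case True then show ?thesis by simp
    next
      case False
      then have ic: "int C dvd (int i - int \<delta>)" using gcl nat_mod_eq_int by blast
      have "(n - i) mod C = a mod C \<longleftrightarrow> n mod C = (a + \<delta>) mod C"
      proof -
        have "int (n - i) = int n - int i" using i by simp
        then have "(n - i) mod C = a mod C \<longleftrightarrow> int C dvd (int n - int i - int a)"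
          by (simp add: nat_mod_eq_int)
        also have "\<dots> \<longleftrightarrow> int C dvd (int n - int i - int a + (int i - int \<delta>))"
          by (rule dvd_add_left_iff[OF ic, symmetric])
        also have "\<dots> \<longleftrightarrow> int C dvd (int n - int (a + \<delta>))"
          by (simp add: algebra_simps)
        also have "\<dots> \<longleftrightarrow> n mod C = (a + \<delta>) mod C"
          by (simp only: nat_mod_eq_int)
        finally show ?thesis .
      qed
      then show ?thesis by simp
    qed
  qed
  also have "\<dots> = coeff (proj C (a + \<delta>) (g * p)) n"
    by (simp add: coeff_proj coeff_mult)
  finally show "coeff (proj C (a + \<delta>) (g * p)) n = coeff (g * proj C a p) n" by simp
qed


lemma core:
  fixes g h f u v :: "'k::field poly"
  assumes C: "C > 0" and mon: "lead_coeff g = 1" and dpos: "degree g > 0"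
    and bez: "u * g + v * h = 1"
    and gcl: "\<forall>i. coeff g i \<noteq> 0 \<longrightarrow> i mod C = degree g mod C"
    and hcl: "\<forall>i. coeff h i \<noteq> 0 \<longrightarrow> i mod C = b mod C"
    and fcl: "\<forall>i. coeff f i \<noteq> 0 \<longrightarrow> i mod C = (p + b) mod C"
    and fY: "\<forall>i. coeff f i \<noteq> 0 \<longrightarrow> i \<in> Yt"
    and hB: "\<forall>j<degree g. j mod C = p mod C \<longrightarrow> j \<in> YB"
    and hYt: "\<And>q. \<forall>j. coeff q j \<noteq> 0 \<longrightarrow> j \<in> YB \<Longrightarrow> \<forall>j. coeff (h * q) j \<noteq> 0 \<longrightarrow> j \<in> Yt"
    and hD: "\<forall>j\<in>Yt. degree g \<le> j \<longrightarrow> j - degree g \<in> YA"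
    and hA: "\<forall>j\<in>YA. \<forall>j'. j' \<le> j \<longrightarrow> j' mod C = j mod C \<longrightarrow> j' \<in> YA"
  shows "\<exists>a bb. (\<forall>j. coeff a j \<noteq> 0 \<longrightarrow> j \<in> YA) \<and> (\<forall>j. coeff bb j \<noteq> 0 \<longrightarrow> j \<in> YB)
            \<and> f = g * a + h * bb"
proof -
  define d where "d = degree g"
  have g0: "g \<noteq> 0" using dpos by auto
  define b0 where "b0 = (v * f) mod g"
  define k where "k = (v * f) div g"
  define X where "X = u * f + h * k"
  have "f = (u * g + v * h) * f" using bez by simp
  also have "\<dots> = g * (u * f) + h * (v * f)" by (simp add: algebra_simps)
  also have "v * f = g * k + b0" unfolding k_def b0_def by (simp add: mult.commute)
  finally have fX: "f = g * X + h * b0" unfolding X_def by (simp add: algebra_simps)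
  define a' where "a' = p + b + (C - d mod C)"
  have a'd: "(a' + d) mod C = (p + b) mod C"
  proof -
    have m1: "d mod C < C" by (rule mod_less_divisor[OF C])
    have m2: "C * (d div C) + d mod C = d" by (rule mult_div_mod_eq)
    have "a' + d = (p + b) + C * Suc (d div C)"
      unfolding a'_def mult_Suc_right using m1 m2 by linarith
    then show ?thesis by (metis mod_mult_self1 mult.commute)
  qed
  have "f = proj C (p + b) f" by (rule proj_id[symmetric]) (use fcl in blast)
  also have "\<dots> = proj C (a' + d) (g * X) + proj C (p + b) (h * b0)"
    by (simp add: fX proj_add proj_cong[OF a'd])
  also have "proj C (a' + d) (g * X) = g * proj C a' X"
    by (rule proj_mult) (use gcl d_def in blast)
  also have "proj C (p + b) (h * b0) = h * proj C p b0"
    by (rule proj_mult) (use hcl in blast)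
  finally have feq: "f = g * proj C a' X + h * proj C p b0" .
  define a where "a = proj C a' X"
  define bb where "bb = proj C p b0"
  have bbY: "\<forall>j. coeff bb j \<noteq> 0 \<longrightarrow> j \<in> YB"
  proof (intro allI impI)
    fix j assume j: "coeff bb j \<noteq> 0"
    then have jc: "j mod C = p mod C" and jb: "coeff b0 j \<noteq> 0" unfolding bb_def coeff_proj
      by (auto split: if_splits)
    then have "b0 \<noteq> 0" by auto
    then have "degree b0 < degree g" using degree_mod_less[OF g0, of "v * f"] unfolding b0_def by blast
    moreover have "j \<le> degree b0" using jb le_degree by blast
    ultimately show "j \<in> YB" using hB jc by simp
  qed
  have aY: "\<forall>j. coeff a j \<noteq> 0 \<longrightarrow> j \<in> YA"
  proof (cases "a = 0")
    case True then show ?thesis by simp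
  next
    case False
    have acl: "\<forall>j. coeff a j \<noteq> 0 \<longrightarrow> j mod C = a' mod C" unfolding a_def coeff_proj by auto
    have dga: "degree (g * a) = d + degree a" using degree_mult_eq[OF g0 False] d_def by simp
    have "coeff (g * a) (d + degree a) = lead_coeff g * lead_coeff a"
      using dga lead_coeff_mult[of g a] by simp
    then have "coeff (g * a) (d + degree a) \<noteq> 0" using mon False by simp
    moreover have "g * a = f - h * bb" using feq a_def bb_def by simp
    ultimately have "coeff f (d + degree a) \<noteq> 0 \<or> coeff (h * bb) (d + degree a) \<noteq> 0"
      by (auto simp: coeff_diff)
    then have "d + degree a \<in> Yt" using fY hYt[OF bbY] by blast
    then have dA: "degree a \<in> YA" using hD d_def by force
    have la: "coeff a (degree a) \<noteq> 0" using False by simp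
    show ?thesis
    proof (intro allI impI)
      fix j assume j: "coeff a j \<noteq> 0"
      then have "j \<le> degree a" by (rule le_degree)
      moreover have "j mod C = degree a mod C" using acl j la by metis
      ultimately show "j \<in> YA" using hA dA by blast
    qed
  qed
  show ?thesis using aY bbY feq a_def bb_def by blast
qed


definition rho :: "'m \<Rightarrow> (('m \<Rightarrow>\<^sub>0 nat) \<Rightarrow>\<^sub>0 'k::field) \<Rightarrow> 'k poly" where
  "rho y P = (\<Sum>e\<in>Poly_Mapping.keys P. monom (Poly_Mapping.lookup P e) (Poly_Mapping.lookup e y))"

lemma rho_superset:
  assumes "finite S" "Poly_Mapping.keys P \<subseteq> S"
  shows "rho y P = (\<Sum>e\<in>S. monom (Poly_Mapping.lookup P e) (Poly_Mapping.lookup e y))"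
  unfolding rho_def
  by (rule sum.mono_neutral_left) (use assms in \<open>auto simp: in_keys_iff\<close>)

lemma rho_zero [simp]: "rho y 0 = 0"
  by (simp add: rho_def)

lemma rho_add: "rho y (P + Q) = rho y P + rho y Q"
proof -
  define S where "S = Poly_Mapping.keys P \<union> Poly_Mapping.keys Q"
  have fS: "finite S" by (simp add: S_def)
  have "rho y (P + Q) = (\<Sum>e\<in>S. monom (Poly_Mapping.lookup (P + Q) e) (Poly_Mapping.lookup e y))"
    by (rule rho_superset[OF fS]) (use keys_add[of P Q] in \<open>auto simp: S_def\<close>)
  also have "\<dots> = (\<Sum>e\<in>S. monom (Poly_Mapping.lookup P e) (Poly_Mapping.lookup e y))
                + (\<Sum>e\<in>S. monom (Poly_Mapping.lookup Q e) (Poly_Mapping.lookup e y))"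
    by (simp add: lookup_add add_monom[symmetric] sum.distrib)
  also have "\<dots> = rho y P + rho y Q"
    using rho_superset[OF fS, of P y] rho_superset[OF fS, of Q y] by (simp add: S_def)
  finally show ?thesis .
qed

lemma rho_sum: "rho y (sum f A) = (\<Sum>a\<in>A. rho y (f a))"
  by (induction A rule: infinite_finite_induct) (auto simp: rho_add)

lemma rho_single [simp]: "rho y (Poly_Mapping.single e a) = monom a (Poly_Mapping.lookup e y)"
  by (simp add: rho_def)

lemma pm_sum_singles:
  "P = (\<Sum>e\<in>Poly_Mapping.keys P. Poly_Mapping.single e (Poly_Mapping.lookup P e))"
proof (rule poly_mapping_eqI)
  fix k
  show "Poly_Mapping.lookup P k = Poly_Mapping.lookup (\<Sum>e\<in>Poly_Mapping.keys P. Poly_Mapping.single e (Poly_Mapping.lookup P e)) k"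
    by (simp add: lookup_sum lookup_single when_def sum.delta in_keys_iff)
qed

lemma rho_mult: "rho y (P * Q) = rho y P * rho y Q"
proof -
  let ?s = "\<lambda>e. Poly_Mapping.single e (Poly_Mapping.lookup P e)"
  let ?t = "\<lambda>f. Poly_Mapping.single f (Poly_Mapping.lookup Q f)"
  have "P * Q = (\<Sum>e\<in>Poly_Mapping.keys P. ?s e) * (\<Sum>f\<in>Poly_Mapping.keys Q. ?t f)"
    using pm_sum_singles[of P] pm_sum_singles[of Q] by simp
  also have "\<dots> = (\<Sum>e\<in>Poly_Mapping.keys P. \<Sum>f\<in>Poly_Mapping.keys Q. ?s e * ?t f)"
    by (rule sum_product)
  finally have PQ: "P * Q = (\<Sum>e\<in>Poly_Mapping.keys P. \<Sum>f\<in>Poly_Mapping.keys Q. ?s e * ?t f)" .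
  have "rho y (P * Q) = (\<Sum>e\<in>Poly_Mapping.keys P. \<Sum>f\<in>Poly_Mapping.keys Q. rho y (?s e) * rho y (?t f))"
    unfolding PQ rho_sum by (simp add: mult_single lookup_add mult_monom)
  also have "\<dots> = rho y P * rho y Q"
    by (simp only: rho_single lookup_single_eq) (simp add: rho_def sum_product)
  finally show ?thesis .
qed

lemma rho_one [simp]: "rho y 1 = 1"
  by (metis rho_single single_one lookup_zero monom_0 one_pCons pCons_0_0 one_poly_def)

lemma coeff_rho: "coeff (rho y P) j = (\<Sum>e\<in>{e\<in>Poly_Mapping.keys P. Poly_Mapping.lookup e y = j}. Poly_Mapping.lookup P e)"
proof -
  have "coeff (rho y P) j = (\<Sum>e\<in>Poly_Mapping.keys P. if Poly_Mapping.lookup e y = j then Poly_Mapping.lookup P e else 0)"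
    by (simp add: rho_def coeff_sum coeff_monom)
  also have "\<dots> = (\<Sum>e\<in>{e\<in>Poly_Mapping.keys P. Poly_Mapping.lookup e y = j}. Poly_Mapping.lookup P e)"
    by (simp add: sum.inter_filter)
  finally show ?thesis .
qed

lemma rho_dvd_one: "P dvd 1 \<Longrightarrow> degree (rho y P) = 0"
proof -
  assume "P dvd 1"
  then obtain Z where "1 = P * Z" by (auto elim: dvdE)
  then have "1 = rho y P * rho y Z" by (metis rho_mult rho_one)
  then have "is_unit (rho y P)" by (metis dvdI)
  moreover have "rho y P \<noteq> 0" using \<open>1 = rho y P * rho y Z\<close> by auto
  ultimately show ?thesis using is_unit_iff_degree by blast
qed


lemma iinner_add: "iinner a (b + d) = iinner a b + iinner a d"
  by (simp add: iinner_def distrib_left sum.distrib)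

lemma iinner_diff: "iinner a (b - d) = iinner a b - iinner a d"
  by (simp add: iinner_def right_diff_distrib sum_subtractf)

lemma iinner_smult: "iinner a (t *s b) = t * iinner a b"
  by (simp add: iinner_def sum_distrib_left algebra_simps)

lemma weight_add: "weight n xi (a + b) = wadd (weight n xi a) (weight n xi b)"
  by (auto simp: weight_def wadd_def iinner_add fun_eq_iff)

lemma wadd_assoc: "wadd (wadd a b) d = wadd a (wadd b d)"
  by (simp add: wadd_def add.assoc)

lemma wadd_comm: "wadd a b = wadd b a"
  by (simp add: wadd_def add.commute)

lemma wadd_cancel: "wadd a b = wadd a b' \<Longrightarrow> b = b'"
  by (auto simp: wadd_def fun_eq_iff)

lemma expvec_add: "expvec (e + f) = expvec e + expvec f"
  by (simp add: expvec_def vec_eq_iff lookup_add)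

definition mono_of :: "int ^ 'm::finite \<Rightarrow> ('m \<Rightarrow>\<^sub>0 nat)" where
  "mono_of u = Abs_poly_mapping (\<lambda>j. nat (u $ j))"

lemma lookup_mono_of: "Poly_Mapping.lookup (mono_of u) j = nat (u $ j)"
  unfolding mono_of_def by (subst lookup_Abs_poly_mapping) auto

lemma expvec_mono_of: "(\<And>j. 0 \<le> u $ j) \<Longrightarrow> expvec (mono_of u) = u"
  by (simp add: expvec_def vec_eq_iff lookup_mono_of)

lemma expvec_inj: "expvec e = expvec f \<Longrightarrow> e = f"
  by (rule poly_mapping_eqI) (simp add: expvec_def vec_eq_iff)

lemma expvec_nonneg: "0 \<le> expvec e $ j"
  by (simp add: expvec_def)

lemma expvec_single_y: "expvec (Poly_Mapping.single y d) $ j = (if j = y then int d else 0)"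
  by (simp add: expvec_def lookup_single when_def)

locale L =
  fixes n :: nat and xi :: "nat \<Rightarrow> int ^ 'm::finite" and y :: 'm and c :: "int ^ 'm"
  assumes cy: "c $ y < 0" and cx: "\<And>k. k \<noteq> y \<Longrightarrow> 0 \<le> c $ k"
    and orth: "\<And>i. i < n \<Longrightarrow> iinner (xi i) c = 0"
    and ker: "\<And>u. (\<And>i. i < n \<Longrightarrow> iinner (xi i) u = 0) \<Longrightarrow> \<exists>t::int. u = t *s c"
begin

definition "C = nat (- c $ y)"

definition wt :: "('m \<Rightarrow>\<^sub>0 nat) \<Rightarrow> nat \<Rightarrow> int" where
  "wt e = weight n xi (expvec e)"

definition Yv :: "(nat \<Rightarrow> int) \<Rightarrow> nat set" where
  "Yv v = {j. \<exists>e. wt e = v \<and> Poly_Mapping.lookup e y = j}"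

lemma C_pos: "C > 0" and C_int: "int C = - c $ y"
  using cy by (auto simp: C_def)

lemma wt_add: "wt (e + f) = wadd (wt e) (wt f)"
  by (simp add: wt_def expvec_add weight_add)

lemma weight_c: "weight n xi (u + t *s c) = weight n xi u"
  by (auto simp: weight_def iinner_add iinner_smult orth fun_eq_iff)

lemma weight_eq_ker:
  assumes "weight n xi u1 = weight n xi u2" shows "\<exists>t. u1 - u2 = t *s c"
proof (rule ker)
  fix i assume i: "i < n"
  have "weight n xi u1 i = weight n xi u2 i" using assms by simp
  then show "iinner (xi i) (u1 - u2) = 0" using i by (simp add: weight_def iinner_diff)
qed

lemma cong_vec:
  assumes "weight n xi u1 = weight n xi u2" shows "int C dvd (u1 $ y - u2 $ y)"
proof -
  obtain t where "u1 - u2 = t *s c" using weight_eq_ker[OF assms] by blast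
  then have "u1 $ y - u2 $ y = t * c $ y" by (metis vector_minus_component vector_smult_component)
  then have "u1 $ y - u2 $ y = int C * (- t)" using C_int by simp
  then show ?thesis by simp
qed

lemma same_y:
  assumes "wt e = wt f" "Poly_Mapping.lookup e y = Poly_Mapping.lookup f y" shows "e = f"
proof -
  obtain t where t: "expvec e - expvec f = t *s c" using weight_eq_ker assms(1) unfolding wt_def by blast
  then have "(expvec e - expvec f) $ y = t * c $ y" by simp
  then have "t * c $ y = 0" using assms(2) by (simp add: expvec_def)
  then have "t = 0" using cy by simp
  then have "expvec e = expvec f" using t by simp
  then show ?thesis by (rule expvec_inj)
qed

lemma cong_y:
  assumes "wt e = wt f" shows "Poly_Mapping.lookup e y mod C = Poly_Mapping.lookup f y mod C"
  using cong_vec[of "expvec e" "expvec f"] assms unfolding wt_def nat_mod_eq_int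
  by (simp add: expvec_def)

lemma Y_down:
  assumes j: "j \<in> Yv v" and le: "j' \<le> j" and m: "j' mod C = j mod C"
  shows "j' \<in> Yv v"
proof -
  obtain e where e: "wt e = v" "Poly_Mapping.lookup e y = j" using j by (auto simp: Yv_def)
  obtain s where s: "j = j' + C * s" using mod_eq_nat2E[OF m le] by blast
  define u where "u = expvec e + int s *s c"
  have u_nn: "0 \<le> u $ k" for k
  proof (cases "k = y")
    case True
    then have "u $ k = int j + int s * c $ y" by (simp add: u_def expvec_def e)
    also have "\<dots> = int j'" using s C_int by (simp add: algebra_simps)
    finally show ?thesis by simp
  next
    case False
    then show ?thesis using cx[OF False] by (simp add: u_def expvec_nonneg)
  qed
  have "wt (mono_of u) = v"
  proof -
    have "wt (mono_of u) = weight n xi u" unfolding wt_def using expvec_mono_of[OF u_nn] by simp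
    also have "\<dots> = weight n xi (expvec e)" unfolding u_def by (rule weight_c)
    finally show ?thesis using e by (simp add: wt_def)
  qed
  moreover have "Poly_Mapping.lookup (mono_of u) y = j'"
    using s C_int by (simp add: lookup_mono_of u_def expvec_def e algebra_simps)
  ultimately show ?thesis by (auto simp: Yv_def)
qed

lemma Y_add: "j \<in> Yv v \<Longrightarrow> j' \<in> Yv v' \<Longrightarrow> j + j' \<in> Yv (wadd v v')"
proof -
  assume "j \<in> Yv v" "j' \<in> Yv v'"
  then obtain e f where "wt e = v" "Poly_Mapping.lookup e y = j" "wt f = v'" "Poly_Mapping.lookup f y = j'"
    by (auto simp: Yv_def)
  then have "wt (e + f) = wadd v v' \<and> Poly_Mapping.lookup (e + f) y = j + j'"
    by (simp add: wt_add lookup_add)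
  then show ?thesis by (auto simp: Yv_def)
qed

lemma Y_sub:
  assumes j: "j \<in> Yv (wadd v' v)" and v': "wt (Poly_Mapping.single y d) = v'" and dj: "d \<le> j"
  shows "j - d \<in> Yv v"
proof -
  obtain e where e: "wt e = wadd v' v" "Poly_Mapping.lookup e y = j" using j by (auto simp: Yv_def)
  define f where "f = e - Poly_Mapping.single y d"
  have lf: "Poly_Mapping.lookup f k = Poly_Mapping.lookup e k - (if k = y then d else 0)" for k
    by (simp add: f_def lookup_minus lookup_single when_def)
  have "e = Poly_Mapping.single y d + f"
    by (rule poly_mapping_eqI) (use e dj in \<open>auto simp: lookup_add lf lookup_single when_def\<close>)
  then have "wt e = wadd v' (wt f)" using v' wt_add by metis
  then have "wt f = v" using e wadd_cancel by metis
  moreover have "Poly_Mapping.lookup f y = j - d" using lf e by simp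
  ultimately show ?thesis by (auto simp: Yv_def)
qed

lemma Rw_mult:
  assumes "P \<in> Rw n xi v" "Q \<in> Rw n xi v'" shows "P * Q \<in> Rw n xi (wadd v v')"
  using assms keys_mult[of P Q] unfolding Rw_def by (auto simp: expvec_add weight_add)

lemma Rw_add:
  assumes "P \<in> Rw n xi v" "Q \<in> Rw n xi v" shows "P + Q \<in> Rw n xi v"
  using assms keys_add[of P Q] unfolding Rw_def by auto

lemma Rw_zero: "0 \<in> Rw n xi v"
  by (simp add: Rw_def)

lemma Rw_single: "wt e = v \<Longrightarrow> Poly_Mapping.single e a \<in> Rw n xi v"
  by (simp add: Rw_def wt_def)

lemma Rw_keys: "P \<in> Rw n xi v \<Longrightarrow> e \<in> Poly_Mapping.keys P \<Longrightarrow> wt e = v"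
  by (simp add: Rw_def wt_def)

lemma Rw_sum: "\<forall>a\<in>A. f a \<in> Rw n xi v \<Longrightarrow> sum f A \<in> Rw n xi v"
  by (induction A rule: infinite_finite_induct) (auto simp: Rw_zero Rw_add)

lemma rho_supp:
  assumes "P \<in> Rw n xi v" "coeff (rho y P) j \<noteq> 0" shows "j \<in> Yv v"
proof -
  have "{e\<in>Poly_Mapping.keys P. Poly_Mapping.lookup e y = j} \<noteq> {}"
    using assms(2) unfolding coeff_rho by (metis sum.empty)
  then obtain e where "e \<in> Poly_Mapping.keys P" "Poly_Mapping.lookup e y = j" by blast
  then show ?thesis using Rw_keys[OF assms(1)] by (auto simp: Yv_def)
qed

lemma rho_coeff_key:
  assumes P: "P \<in> Rw n xi v" and e: "wt e = v"
  shows "Poly_Mapping.lookup P e = coeff (rho y P) (Poly_Mapping.lookup e y)"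
proof -
  have "{e'\<in>Poly_Mapping.keys P. Poly_Mapping.lookup e' y = Poly_Mapping.lookup e y}
        = (if e \<in> Poly_Mapping.keys P then {e} else {})"
    using same_y Rw_keys[OF P] e by auto
  then show ?thesis unfolding coeff_rho by (auto simp: in_keys_iff)
qed

lemma rho_inj:
  assumes P: "P \<in> Rw n xi v" and Q: "Q \<in> Rw n xi v" and eq: "rho y P = rho y Q"
  shows "P = Q"
proof (rule poly_mapping_eqI)
  fix e
  show "Poly_Mapping.lookup P e = Poly_Mapping.lookup Q e"
  proof (cases "wt e = v")
    case True
    then show ?thesis using rho_coeff_key[OF P True] rho_coeff_key[OF Q True] eq by simp
  next
    case False
    then have "e \<notin> Poly_Mapping.keys P" "e \<notin> Poly_Mapping.keys Q" using Rw_keys P Q by blast+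
    then show ?thesis by (simp add: in_keys_iff)
  qed
qed

lemma rho_lift:
  fixes p :: "'k::field poly"
  assumes supp: "\<forall>j. coeff p j \<noteq> 0 \<longrightarrow> j \<in> Yv v"
  shows "\<exists>P. P \<in> Rw n xi v \<and> rho y P = p"
proof -
  define E where "E j = (SOME e. wt e = v \<and> Poly_Mapping.lookup e y = j)" for j
  have E: "wt (E j) = v \<and> Poly_Mapping.lookup (E j) y = j" if "coeff p j \<noteq> 0" for j
  proof -
    have "\<exists>e. wt e = v \<and> Poly_Mapping.lookup e y = j" using supp that by (auto simp: Yv_def)
    then show ?thesis unfolding E_def by (rule someI_ex)
  qed
  define P where "P = (\<Sum>j\<le>degree p. Poly_Mapping.single (E j) (coeff p j))"
  have "P \<in> Rw n xi v"
    unfolding P_def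
  proof (rule Rw_sum, intro ballI)
    fix j
    show "Poly_Mapping.single (E j) (coeff p j) \<in> Rw n xi v"
      by (cases "coeff p j = 0") (auto simp: Rw_zero intro!: Rw_single dest: E)
  qed
  moreover have "rho y P = p"
  proof -
    have "rho y P = (\<Sum>j\<le>degree p. monom (coeff p j) (Poly_Mapping.lookup (E j) y))"
      by (simp add: P_def rho_sum)
    also have "\<dots> = (\<Sum>j\<le>degree p. monom (coeff p j) j)"
      by (rule sum.cong[OF refl]) (metis E monom_eq_0)
    also have "\<dots> = p" by (rule poly_as_sum_of_monoms)
    finally show ?thesis .
  qed
  ultimately show ?thesis by blast
qed

end


lemma cop_X:
  fixes q :: "'k::field poly"
  assumes "poly q 0 \<noteq> 0" shows "coprime [:0, 1:] q"
proof -
  define a where "a = poly q 0"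
  have e: "[:0, 1:] * synthetic_div q 0 + [:a:] = q"
    using synthetic_div_correct'[of 0 q] by (simp add: a_def)
  have "(- [:1 / a:] * synthetic_div q 0) * [:0, 1:] + [:1 / a:] * q = 1"
  proof -
    have "[:1 / a:] * q = [:1 / a:] * ([:0, 1:] * synthetic_div q 0) + [:1 / a:] * [:a:]"
      by (subst e[symmetric]) (simp add: algebra_simps)
    moreover have "[:1 / a:] * [:a:] = (1 :: 'k poly)" using assms a_def by (simp add: one_pCons)
    ultimately show ?thesis by (simp add: algebra_simps)
  qed
  then show ?thesis by (rule coprime_of_bez)
qed

lemma cop_mult_left:
  fixes a b c :: "'k::field poly"
  assumes "coprime a b" "coprime c b" shows "coprime (a * c) b"
proof -
  obtain u v where 1: "u * a + v * b = 1" using bez_of_coprime[OF assms(1)] by blast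
  obtain u' v' where 2: "u' * c + v' * b = 1" using bez_of_coprime[OF assms(2)] by blast
  have "(u * a) * (u' * c) = (1 - v * b) * (1 - v' * b)"
    using 1 2 by (metis add_diff_cancel_right')
  then have "(u * u') * (a * c) + (v + v' - v * v' * b) * b = 1"
    by (simp add: algebra_simps)
  then show ?thesis by (rule coprime_of_bez)
qed

lemma cop_power_left:
  fixes a b :: "'k::field poly"
  assumes "coprime a b" shows "coprime (a ^ r) b"
  by (induction r) (simp_all add: cop_mult_left assms)

lemma cop_monom:
  fixes q :: "'k::field poly"
  assumes "poly q 0 \<noteq> 0" shows "coprime (monom 1 r) q"
  using cop_power_left[OF cop_X[OF assms]] by (simp add: monom_altdef)

lemma cop_pcompose:
  fixes a b q :: "'k::field poly"
  assumes "coprime a b" shows "coprime (pcompose a q) (pcompose b q)"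
proof -
  obtain u v where "u * a + v * b = 1" using bez_of_coprime[OF assms] by blast
  then have "pcompose (u * a + v * b) q = 1" by (simp add: pcompose_1)
  then have "pcompose u q * pcompose a q + pcompose v q * pcompose b q = 1"
    by (simp add: pcompose_add pcompose_mult)
  then show ?thesis by (rule coprime_of_bez)
qed

context L begin

definition Yp :: "nat \<Rightarrow> ('m \<Rightarrow>\<^sub>0 nat) \<Rightarrow>\<^sub>0 'k::field" where
  "Yp r = Poly_Mapping.single (Poly_Mapping.single y r) 1"

lemma wY_add: "wt (Poly_Mapping.single y (a + b)) = wadd (wt (Poly_Mapping.single y a)) (wt (Poly_Mapping.single y b))"
  by (simp add: single_add wt_add)

lemma Yp_Rw: "Yp r \<in> Rw n xi (wt (Poly_Mapping.single y r))"
  unfolding Yp_def by (rule Rw_single) simp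

lemma rho_Yp [simp]: "rho y (Yp r) = monom 1 r"
  by (simp add: Yp_def)

lemma Yp_add: "Yp (a + b) = Yp a * Yp b"
  by (simp add: Yp_def mult_single single_add)

lemma Yv_single: "j \<in> Yv (wt (Poly_Mapping.single y j))"
  by (auto simp: Yv_def)

lemma Yv_cong: "i \<in> Yv v \<Longrightarrow> i' \<in> Yv v \<Longrightarrow> i mod C = i' mod C"
proof -
  assume "i \<in> Yv v" "i' \<in> Yv v"
  then obtain e e' where "wt e = v" "Poly_Mapping.lookup e y = i" "wt e' = v" "Poly_Mapping.lookup e' y = i'"
    unfolding Yv_def by blast
  then show ?thesis using cong_y[of e e'] by simp
qed

lemma rho_class:
  assumes P: "P \<in> Rw n xi v" and p0: "rho y P \<noteq> 0"
  shows "\<forall>i. coeff (rho y P) i \<noteq> 0 \<longrightarrow> i mod C = degree (rho y P) mod C"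
proof (intro allI impI)
  fix i assume "coeff (rho y P) i \<noteq> 0"
  then have "i \<in> Yv v" by (rule rho_supp[OF P])
  moreover have "degree (rho y P) \<in> Yv v" using p0 by (intro rho_supp[OF P]) simp
  ultimately show "i mod C = degree (rho y P) mod C" by (rule Yv_cong)
qed

definition Lam :: "'k::field poly \<Rightarrow> ('m \<Rightarrow>\<^sub>0 nat) \<Rightarrow>\<^sub>0 'k" where
  "Lam q = (SOME P. P \<in> Rw n xi (wt (Poly_Mapping.single y (C * degree q))) \<and> rho y P = pcompose q (monom 1 C))"

lemma Lam:
  fixes q :: "'k::field poly"
  shows "Lam q \<in> Rw n xi (wt (Poly_Mapping.single y (C * degree q))) \<and> rho y (Lam q) = pcompose q (monom 1 C)"
proof -
  have "\<exists>P. P \<in> Rw n xi (wt (Poly_Mapping.single y (C * degree q))) \<and> rho y P = pcompose q (monom 1 C)"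
  proof (rule rho_lift, intro allI impI)
    fix j assume j: "coeff (pcompose q (monom 1 C)) j \<noteq> 0"
    then have dv: "C dvd j" and cq: "coeff q (j div C) \<noteq> 0"
      by (auto simp: coeff_pcompose_monom[OF C_pos] split: if_splits)
    then have "j div C \<le> degree q" by (simp add: le_degree)
    then have "C * (j div C) \<le> C * degree q" by simp
    moreover have "C * (j div C) = j" using dv by simp
    moreover have "j mod C = (C * degree q) mod C" using dv by simp
    ultimately show "j \<in> Yv (wt (Poly_Mapping.single y (C * degree q)))"
      by (intro Y_down[OF Yv_single]) auto
  qed
  then show ?thesis unfolding Lam_def by (rule someI_ex)
qed

lemma Lam_mult:
  fixes q1 q2 :: "'k::field poly"
  assumes "q1 \<noteq> 0" "q2 \<noteq> 0"
  shows "Lam (q1 * q2) = Lam q1 * Lam q2"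
proof (rule rho_inj)
  show "Lam (q1 * q2) \<in> Rw n xi (wt (Poly_Mapping.single y (C * degree (q1 * q2))))" using Lam by blast
  have "Lam q1 * Lam q2 \<in> Rw n xi (wadd (wt (Poly_Mapping.single y (C * degree q1))) (wt (Poly_Mapping.single y (C * degree q2))))"
    using Lam Rw_mult by blast
  then show "Lam q1 * Lam q2 \<in> Rw n xi (wt (Poly_Mapping.single y (C * degree (q1 * q2))))"
    using assms by (simp add: degree_mult_eq distrib_left wY_add)
  show "rho y (Lam (q1 * q2)) = rho y (Lam q1 * Lam q2)"
    by (simp add: rho_mult Lam pcompose_mult)
qed

lemma Lam_X: "Lam [:0, 1:] = (Yp C :: ('m \<Rightarrow>\<^sub>0 nat) \<Rightarrow>\<^sub>0 'k::field)"
proof (rule rho_inj)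
  show "Lam [:0, 1::'k:] \<in> Rw n xi (wt (Poly_Mapping.single y C))" using Lam[of "[:0, 1::'k:]"] by simp
  show "(Yp C :: ('m \<Rightarrow>\<^sub>0 nat) \<Rightarrow>\<^sub>0 'k) \<in> Rw n xi (wt (Poly_Mapping.single y C))" by (rule Yp_Rw)
  show "rho y (Lam [:0, 1::'k:]) = rho y (Yp C :: ('m \<Rightarrow>\<^sub>0 nat) \<Rightarrow>\<^sub>0 'k)"
    using Lam[of "[:0, 1::'k:]"] by (simp add: pcompose_pCons)
qed

lemma factor:
  fixes P :: "('m \<Rightarrow>\<^sub>0 nat) \<Rightarrow>\<^sub>0 'k::field"
  assumes P: "P \<in> Rw n xi v" and p0: "rho y P \<noteq> 0"
  shows "\<exists>q. q \<noteq> 0 \<and> Yp (degree (rho y P) mod C) dvd P \<and> (\<forall>q1. q1 dvd q \<longrightarrow> Lam q1 dvd P)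
     \<and> rho y P = monom 1 (degree (rho y P) mod C) * pcompose q (monom 1 C)"
proof -
  define p where "p = rho y P"
  define r where "r = degree p mod C"
  have rC: "r < C" using C_pos by (simp add: r_def)
  obtain q where pq: "p = monom 1 r * pcompose q (monom 1 C)"
    using decomp_class[OF C_pos rC] rho_class[OF P p0] unfolding p_def r_def by blast
  have q0: "q \<noteq> 0" using pq p0 p_def by auto
  have dp: "degree p = r + C * degree q"
    using pq q0 C_pos by (simp add: degree_mult_eq degree_monom_eq degree_pcompose pcompose_eq_0_iff mult.commute)
  have "coeff p (degree p) \<noteq> 0" using p0 p_def by simp
  then have "{e\<in>Poly_Mapping.keys P. Poly_Mapping.lookup e y = degree p} \<noteq> {}"
    unfolding p_def coeff_rho by (metis sum.empty)
  then obtain eP where eP: "eP \<in> Poly_Mapping.keys P" "Poly_Mapping.lookup eP y = degree p" by blast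
  define f where "f = eP - Poly_Mapping.single y (degree p)"
  have lf: "Poly_Mapping.lookup f k = Poly_Mapping.lookup eP k - (if k = y then degree p else 0)" for k
    by (simp add: f_def lookup_minus lookup_single when_def)
  have fe: "f + Poly_Mapping.single y r + Poly_Mapping.single y (C * degree q) = eP"
    by (rule poly_mapping_eqI) (auto simp: lookup_add lf lookup_single when_def eP dp)
  define X :: "('m \<Rightarrow>\<^sub>0 nat) \<Rightarrow>\<^sub>0 'k" where "X = Poly_Mapping.single f 1"
  have PX: "P = X * Yp r * Lam q"
  proof (rule rho_inj[OF P])
    have "X * Yp r * Lam q \<in> Rw n xi (wadd (wadd (wt f) (wt (Poly_Mapping.single y r))) (wt (Poly_Mapping.single y (C * degree q))))"
      by (intro Rw_mult Yp_Rw) (auto simp: X_def intro: Rw_single Lam[THEN conjunct1])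
    moreover have "wadd (wadd (wt f) (wt (Poly_Mapping.single y r))) (wt (Poly_Mapping.single y (C * degree q))) = v"
      using fe Rw_keys[OF P eP(1)] by (metis wt_add)
    ultimately show "X * Yp r * Lam q \<in> Rw n xi v" by simp
    have "rho y X = 1" by (simp add: X_def lf eP monom_0 one_pCons)
    then show "rho y P = rho y (X * Yp r * Lam q)"
      by (simp add: rho_mult Lam pq[symmetric] p_def)
  qed
  have YP: "Yp r dvd P" by (rule dvdI[of _ _ "X * Lam q"]) (simp add: PX algebra_simps)
  have LP: "Lam q1 dvd P" if q1q: "q1 dvd q" for q1
  proof -
    obtain q2 where q: "q = q1 * q2" using q1q by (auto elim: dvdE)
    then have "q1 \<noteq> 0" "q2 \<noteq> 0" using q0 by auto
    then have "Lam q = Lam q1 * Lam q2" using q Lam_mult by blast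
    then show ?thesis by (intro dvdI[of _ _ "X * Yp r * Lam q2"]) (simp add: PX algebra_simps)
  qed
  have "q \<noteq> 0 \<and> Yp r dvd P \<and> (\<forall>q1. q1 dvd q \<longrightarrow> Lam q1 dvd P) \<and> p = monom 1 r * pcompose q (monom 1 C)"
    using q0 YP pq LP by simp
  then show ?thesis unfolding p_def r_def by (rule exI)
qed

end


context L begin

lemma Yp1_dvd: "0 < r \<Longrightarrow> (Yp 1 :: ('m \<Rightarrow>\<^sub>0 nat) \<Rightarrow>\<^sub>0 'k::field) dvd Yp r"
  using Yp_add[of 1 "r - 1"] by (intro dvdI[of _ _ "Yp (r - 1)"]) simp

lemma cop_rho:
  fixes G H :: "('m \<Rightarrow>\<^sub>0 nat) \<Rightarrow>\<^sub>0 'k::field"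
  assumes G: "G \<in> Rw n xi w" and H: "H \<in> Rw n xi z" and g0: "rho y G \<noteq> 0" and h0: "rho y H \<noteq> 0"
    and cop: "coprime_poly G H"
  shows "coprime (rho y G) (rho y H)"
proof -
  have nu: "degree (rho y D) = 0" if DG: "D dvd G" and DH: "D dvd H" for D
  proof -
    have "D dvd 1" using cop DG DH unfolding coprime_poly_def by simp
    then show ?thesis by (rule rho_dvd_one)
  qed
  define rg where "rg = degree (rho y G) mod C"
  define rh where "rh = degree (rho y H) mod C"
  define m :: "'k poly" where "m = monom 1 C"
  obtain qg where qg: "qg \<noteq> 0" "Yp rg dvd G" "\<forall>q1. q1 dvd qg \<longrightarrow> Lam q1 dvd G"
      "rho y G = monom 1 rg * pcompose qg m"
    using factor[OF G g0, folded rg_def m_def] by (elim exE conjE) simp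
  obtain qh where qh: "qh \<noteq> 0" "Yp rh dvd H" "\<forall>q1. q1 dvd qh \<longrightarrow> Lam q1 dvd H"
      "rho y H = monom 1 rh * pcompose qh m"
    using factor[OF H h0, folded rh_def m_def] by (elim exE conjE) simp
  have Y1: "degree (rho y (Yp 1 :: ('m \<Rightarrow>\<^sub>0 nat) \<Rightarrow>\<^sub>0 'k)) = 1"
    by (simp add: degree_monom_eq)
  have c1: "coprime qg qh"
  proof (rule coprimeI)
    fix D assume D: "D dvd qg" "D dvd qh"
    then have "Lam D dvd G" "Lam D dvd H" using qg(3) qh(3) by simp_all
    then have "degree (rho y (Lam D)) = 0" by (meson nu)
    then have "degree D * C = 0" using Lam[of D] C_pos by (simp add: degree_pcompose degree_monom_eq)
    then have "degree D = 0" using C_pos by simp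
    moreover have "D \<noteq> 0" using D qg by auto
    ultimately show "is_unit D" by (simp add: is_unit_iff_degree)
  qed
  have c2: "\<not> (0 < rg \<and> 0 < rh)"
  proof
    assume "0 < rg \<and> 0 < rh"
    then have "Yp 1 dvd Yp rg" "Yp 1 dvd Yp rh" using Yp1_dvd by auto
    then have "Yp 1 dvd G" "Yp 1 dvd H" using qg(2) qh(2) dvd_trans by metis+
    then have "degree (rho y (Yp 1 :: ('m \<Rightarrow>\<^sub>0 nat) \<Rightarrow>\<^sub>0 'k)) = 0" by (meson nu)
    then show False using Y1 by simp
  qed
  have YC: "Yp 1 dvd P" if "Yp C dvd P" for P :: "('m \<Rightarrow>\<^sub>0 nat) \<Rightarrow>\<^sub>0 'k"
    using that Yp1_dvd[OF C_pos] dvd_trans by metis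
  have X0: "poly q 0 \<noteq> 0" if q: "\<forall>q1. q1 dvd q \<longrightarrow> Lam q1 dvd P" and P: "\<not> Yp 1 dvd P"
    for q :: "'k poly" and P :: "('m \<Rightarrow>\<^sub>0 nat) \<Rightarrow>\<^sub>0 'k"
  proof
    assume "poly q 0 = 0"
    then have "[:0, 1:] dvd q" using poly_eq_0_iff_dvd[of q 0] by simp
    then have "Lam [:0, 1:] dvd P" using q by simp
    then have "Yp C dvd P" by (simp add: Lam_X)
    then show False using P YC by simp
  qed
  have c3: "poly qh 0 \<noteq> 0" if "0 < rg"
  proof (rule X0[OF qh(3)])
    show "\<not> Yp 1 dvd H"
    proof
      assume "Yp 1 dvd H"
      moreover have "Yp 1 dvd G" using qg(2) Yp1_dvd[OF that] dvd_trans by metis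
      ultimately have "degree (rho y (Yp 1 :: ('m \<Rightarrow>\<^sub>0 nat) \<Rightarrow>\<^sub>0 'k)) = 0" by (meson nu)
      then show False using Y1 by simp
    qed
  qed
  have c4: "poly qg 0 \<noteq> 0" if "0 < rh"
  proof (rule X0[OF qg(3)])
    show "\<not> Yp 1 dvd G"
    proof
      assume "Yp 1 dvd G"
      moreover have "Yp 1 dvd H" using qh(2) Yp1_dvd[OF that] dvd_trans by metis
      ultimately have "degree (rho y (Yp 1 :: ('m \<Rightarrow>\<^sub>0 nat) \<Rightarrow>\<^sub>0 'k)) = 0" by (meson nu)
      then show False using Y1 by simp
    qed
  qed
  have pm: "poly m 0 = 0" using C_pos by (simp add: m_def poly_monom)
  have a1: "coprime (monom 1 rg) (monom 1 rh :: 'k poly)"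
    using c2 by (cases "rg = 0") (auto simp: monom_0 one_pCons[symmetric])
  have a2: "coprime (monom 1 rg) (pcompose qh m)"
  proof (cases "rg = 0")
    case True then show ?thesis by (simp add: monom_0 one_pCons[symmetric])
  next
    case False then show ?thesis using c3 pm by (intro cop_monom) (simp add: poly_pcompose)
  qed
  have a3: "coprime (pcompose qg m) (monom 1 rh)"
  proof (cases "rh = 0")
    case True then show ?thesis by (simp add: monom_0 one_pCons[symmetric])
  next
    case False
    then have "coprime (monom 1 rh) (pcompose qg m)" using c4 pm by (intro cop_monom) (simp add: poly_pcompose)
    then show ?thesis by (simp add: coprime_commute)
  qed
  have a4: "coprime (pcompose qg m) (pcompose qh m)" by (rule cop_pcompose[OF c1])
  have l1: "coprime (monom 1 rg * pcompose qg m) (monom 1 rh)"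
    by (rule cop_mult_left[OF a1 a3])
  have l2: "coprime (monom 1 rg * pcompose qg m) (pcompose qh m)"
    by (rule cop_mult_left[OF a2 a4])
  have l1': "coprime (monom 1 rh) (monom 1 rg * pcompose qg m)" using l1 coprime_commute by blast
  have l2': "coprime (pcompose qh m) (monom 1 rg * pcompose qg m)" using l2 coprime_commute by blast
  have "coprime (monom 1 rh * pcompose qh m) (monom 1 rg * pcompose qg m)"
    by (rule cop_mult_left[OF l1' l2'])
  then have "coprime (monom 1 rg * pcompose qg m) (monom 1 rh * pcompose qh m)"
    using coprime_commute by blast
  then show ?thesis using qg(4) qh(4) by simp
qed

end


lemma wadd_zero: "wadd (\<lambda>_. 0) z = z"
  by (simp add: wadd_def)

lemma wadd_perm: "wadd z (wadd w i) = wadd (wadd w z) i"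
  by (simp add: wadd_def fun_eq_iff algebra_simps)

context L begin

lemma wt_zero: "wt 0 = (\<lambda>_. 0)"
  by (simp add: wt_def weight_def iinner_def expvec_def fun_eq_iff)

lemma main_L:
  fixes G H :: "('m \<Rightarrow>\<^sub>0 nat) \<Rightarrow>\<^sub>0 'k::field"
  assumes G: "G \<in> Rw n xi w" and H: "H \<in> Rw n xi z" and cop: "coprime_poly G H"
    and monic: "monic_in y G"
    and gam: "weight n xi \<gamma> = i" and gamc: "\<And>k. k \<noteq> y \<Longrightarrow> 0 \<le> int C * \<gamma> $ k + c $ k * \<gamma> $ y"
  shows "{G * A + H * B | A B. A \<in> Rw n xi (wadd z i) \<and> B \<in> Rw n xi (wadd w i)} = Rw n xi (wadd (wadd w z) i)"
proof
  show "{G * A + H * B | A B. A \<in> Rw n xi (wadd z i) \<and> B \<in> Rw n xi (wadd w i)} \<subseteq> Rw n xi (wadd (wadd w z) i)"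
  proof
    fix X :: "('m \<Rightarrow>\<^sub>0 nat) \<Rightarrow>\<^sub>0 'k" assume "X \<in> {G * A + H * B | A B. A \<in> Rw n xi (wadd z i) \<and> B \<in> Rw n xi (wadd w i)}"
    then obtain A B where X: "X = G * A + H * B" and A: "A \<in> Rw n xi (wadd z i)" and B: "B \<in> Rw n xi (wadd w i)"
      by blast
    have "G * A \<in> Rw n xi (wadd (wadd w z) i)" using Rw_mult[OF G A] by (simp only: wadd_assoc[symmetric])
    moreover have "H * B \<in> Rw n xi (wadd (wadd w z) i)" using Rw_mult[OF H B] by (simp only: wadd_perm)
    ultimately show "X \<in> Rw n xi (wadd (wadd w z) i)" unfolding X by (rule Rw_add)
  qed
next
  show "Rw n xi (wadd (wadd w z) i) \<subseteq> {G * A + H * B | A B. A \<in> Rw n xi (wadd z i) \<and> B \<in> Rw n xi (wadd w i)}"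
  proof
    fix F :: "('m \<Rightarrow>\<^sub>0 nat) \<Rightarrow>\<^sub>0 'k" assume F: "F \<in> Rw n xi (wadd (wadd w z) i)"
    obtain d where dd: "Poly_Mapping.lookup G (Poly_Mapping.single y d) = 1 \<and>
       (\<forall>e\<in>Poly_Mapping.keys G. Poly_Mapping.lookup e y \<le> d \<and> (Poly_Mapping.lookup e y = d \<longrightarrow> e = Poly_Mapping.single y d))"
      using monic unfolding monic_in_def by (rule exE)
    note md = conjunct1[OF dd]
    note kG = conjunct2[OF dd]
    have inG: "Poly_Mapping.single y d \<in> Poly_Mapping.keys G" using md by (simp add: in_keys_iff)
    have w_eq: "w = wt (Poly_Mapping.single y d)" using Rw_keys[OF G inG] by (rule sym)
    define g where "g = rho y G"
    define h where "h = rho y H"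
    define f where "f = rho y F"
    have cgd: "coeff g d = 1"
    proof -
      have "{e\<in>Poly_Mapping.keys G. Poly_Mapping.lookup e y = d} = {Poly_Mapping.single y d}"
      proof (rule set_eqI, rule iffI)
        fix e assume "e \<in> {e\<in>Poly_Mapping.keys G. Poly_Mapping.lookup e y = d}"
        then have e: "e \<in> Poly_Mapping.keys G" "Poly_Mapping.lookup e y = d" by simp_all
        have "Poly_Mapping.lookup e y \<le> d \<and> (Poly_Mapping.lookup e y = d \<longrightarrow> e = Poly_Mapping.single y d)"
          by (rule bspec[OF kG e(1)])
        then show "e \<in> {Poly_Mapping.single y d}" using e(2) by simp
      next
        fix e assume "e \<in> {Poly_Mapping.single y d}"
        then show "e \<in> {e\<in>Poly_Mapping.keys G. Poly_Mapping.lookup e y = d}" using inG by simp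
      qed
      then show ?thesis unfolding g_def coeff_rho using md by simp
    qed
    have cgj: "coeff g j = 0" if "d < j" for j
    proof -
      have "{e\<in>Poly_Mapping.keys G. Poly_Mapping.lookup e y = j} = {}"
      proof (rule equals0I)
        fix e assume "e \<in> {e\<in>Poly_Mapping.keys G. Poly_Mapping.lookup e y = j}"
        then have e: "e \<in> Poly_Mapping.keys G" "Poly_Mapping.lookup e y = j" by simp_all
        have "Poly_Mapping.lookup e y \<le> d" using bspec[OF kG e(1)] by simp
        then show False using e(2) that by simp
      qed
      then show ?thesis unfolding g_def coeff_rho by (simp only: sum.empty)
    qed
    have dg: "degree g = d"
    proof (rule antisym)
      show "degree g \<le> d" using cgj by (meson degree_le not_le)
      show "d \<le> degree g" using cgd by (simp add: le_degree)
    qed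
    have lg: "lead_coeff g = 1" using dg cgd by simp
    have g0: "g \<noteq> 0" using lg by auto
    show "F \<in> {G * A + H * B | A B. A \<in> Rw n xi (wadd z i) \<and> B \<in> Rw n xi (wadd w i)}"
    proof (cases "d = 0")
      case True
      have "(1 :: ('m \<Rightarrow>\<^sub>0 nat) \<Rightarrow>\<^sub>0 'k) \<in> Rw n xi w"
        using Rw_single[of 0 w 1] w_eq True by simp
      moreover have "g = 1"
      proof -
        have "g = [:coeff g 0:]" using dg True by (simp add: degree_0_id)
        then show ?thesis using cgd True by (simp add: one_pCons)
      qed
      ultimately have G1: "G = 1" using rho_inj[OF G] g_def by (metis rho_one)
      have w0: "w = (\<lambda>_. 0)" using w_eq True wt_zero by simp
      have "F \<in> Rw n xi (wadd z i)" using F w0 by (simp add: wadd_zero)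
      moreover have "F = G * F + H * 0" using G1 by simp
      moreover have "(0 :: ('m \<Rightarrow>\<^sub>0 nat) \<Rightarrow>\<^sub>0 'k) \<in> Rw n xi (wadd w i)" by (rule Rw_zero)
      ultimately show ?thesis by blast
    next
      case False
      then have dpos: "degree g > 0" using dg by simp
      have H0: "H \<noteq> 0"
      proof
        assume "H = 0"
        then have "G dvd 1" using cop unfolding coprime_poly_def by simp
        then have "degree g = 0" unfolding g_def by (rule rho_dvd_one)
        then show False using dpos by simp
      qed
      have h0: "h \<noteq> 0"
      proof
        assume "h = 0"
        then have "rho y H = rho y 0" by (simp add: h_def)
        then have "H = 0" using rho_inj[OF H Rw_zero] by simp
        then show False using H0 by simp
      qed
      have "coprime g h" unfolding g_def h_def by (rule cop_rho[OF G H g0[unfolded g_def] h0[unfolded h_def] cop])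
      then obtain u v where bez: "u * g + v * h = 1" using bez_of_coprime by blast
      obtain eH where eH: "eH \<in> Poly_Mapping.keys H" using H0 by (metis keys_eq_empty all_not_in_conv)
      define b where "b = Poly_Mapping.lookup eH y"
      have bY: "b \<in> Yv z" using Rw_keys[OF H eH] by (auto simp: Yv_def b_def)
      have hcl: "\<forall>j. coeff h j \<noteq> 0 \<longrightarrow> j mod C = b mod C"
        using rho_supp[OF H] bY Yv_cong unfolding h_def by blast
      have gcl: "\<forall>j. coeff g j \<noteq> 0 \<longrightarrow> j mod C = degree g mod C"
        using rho_class[OF G] g0 unfolding g_def by blast
      define q0 where "q0 = (- \<gamma> $ y) div int C"
      define r0 where "r0 = (- \<gamma> $ y) mod int C"
      have qr: "- \<gamma> $ y = int C * q0 + r0" unfolding q0_def r0_def by simp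
      have r0b: "0 \<le> r0" "r0 < int C" unfolding r0_def using C_pos by simp_all
      define P0 where "P0 = expvec (Poly_Mapping.single y d) + \<gamma> + (- q0) *s c"
      have P0w: "weight n xi P0 = wadd w i"
      proof -
        have "weight n xi P0 = weight n xi (expvec (Poly_Mapping.single y d) + \<gamma>)"
          unfolding P0_def by (rule weight_c)
        also have "\<dots> = wadd w i" using w_eq gam by (simp add: weight_add wt_def)
        finally show ?thesis .
      qed
      have P0y: "P0 $ y = int d - r0"
        unfolding P0_def using qr C_int by (simp add: expvec_single_y algebra_simps)
      have P0k: "0 \<le> P0 $ k" if k: "k \<noteq> y" for k
      proof -
        have e: "P0 $ k = \<gamma> $ k - q0 * c $ k" unfolding P0_def using k by (simp add: expvec_single_y)
        have "int C * (\<gamma> $ k - q0 * c $ k) = int C * \<gamma> $ k + c $ k * (- (int C * q0))"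
          by (simp add: algebra_simps)
        also have "- (int C * q0) = \<gamma> $ y + r0" using qr by simp
        also have "int C * \<gamma> $ k + c $ k * (\<gamma> $ y + r0) = (int C * \<gamma> $ k + c $ k * \<gamma> $ y) + c $ k * r0"
          by (simp add: algebra_simps)
        also have "\<dots> \<ge> 0" using gamc[OF k] cx[OF k] r0b by simp
        finally have "0 \<le> int C * P0 $ k" using e by simp
        then show ?thesis using C_pos by (simp add: zero_le_mult_iff)
      qed
      define p where "p = nat (P0 $ y mod int C)"
      have hB: "\<forall>j<degree g. j mod C = p mod C \<longrightarrow> j \<in> Yv (wadd w i)"
      proof (intro allI impI)
        fix j assume jd: "j < degree g" and jm: "j mod C = p mod C"
        have pC: "p < C" unfolding p_def using C_pos by (simp add: nat_less_iff)
        have ip: "int p = P0 $ y mod int C" unfolding p_def using C_pos by simp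
        have e1: "int C dvd (int j - int p)" using jm nat_mod_eq_int by blast
        have e2: "int C dvd (int p - P0 $ y)" unfolding ip
          using dvd_minus_mod[of "int C" "P0 $ y"] dvd_diff_commute by blast
        have "int C dvd ((int j - int p) + (int p - P0 $ y))" using e1 e2 by (rule dvd_add)
        then have dv: "int C dvd (int j - P0 $ y)" by simp
        have lt: "int j - P0 $ y < int C" using jd dg P0y r0b by simp
        have le: "int j \<le> P0 $ y"
        proof (rule ccontr)
          assume "\<not> ?thesis"
          then have "0 < int j - P0 $ y" by simp
          then have "int C \<le> int j - P0 $ y" using dv by (simp add: zdvd_imp_le)
          then show False using lt by simp
        qed
        have nn: "0 \<le> P0 $ k" for k using P0k le by (cases "k = y") auto
        have "wt (mono_of P0) = wadd w i" unfolding wt_def expvec_mono_of[OF nn] by (rule P0w)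
        moreover have ly: "Poly_Mapping.lookup (mono_of P0) y = nat (P0 $ y)" by (simp add: lookup_mono_of)
        ultimately have "nat (P0 $ y) \<in> Yv (wadd w i)" by (auto simp: Yv_def)
        moreover have "j \<le> nat (P0 $ y)" using le by simp
        moreover have "j mod C = nat (P0 $ y) mod C"
          unfolding nat_mod_eq_int using dv le by (simp add: dvd_diff_commute)
        ultimately show "j \<in> Yv (wadd w i)" by (rule Y_down)
      qed
      have fcl: "\<forall>j. coeff f j \<noteq> 0 \<longrightarrow> j mod C = (p + b) mod C"
      proof (intro allI impI)
        fix j assume "coeff f j \<noteq> 0"
        then have "j \<in> Yv (wadd (wadd w z) i)" unfolding f_def by (rule rho_supp[OF F])
        then obtain e where e: "wt e = wadd (wadd w z) i" "Poly_Mapping.lookup e y = j" by (auto simp: Yv_def)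
        have "weight n xi (expvec e) = weight n xi (P0 + expvec eH)"
          using e(1) P0w Rw_keys[OF H eH] by (simp add: wt_def weight_add wadd_def fun_eq_iff algebra_simps)
        then have d1: "int C dvd (expvec e $ y - (P0 + expvec eH) $ y)" by (rule cong_vec)
        have ip: "int p = P0 $ y mod int C" unfolding p_def using C_pos by simp
        have d2: "int C dvd (P0 $ y - int p)" unfolding ip by (rule dvd_minus_mod)
        have "int C dvd ((expvec e $ y - (P0 + expvec eH) $ y) + (P0 $ y - int p))" using d1 d2 by (rule dvd_add)
        then have "int C dvd (int j - int (p + b))" using e(2) by (simp add: expvec_def b_def algebra_simps)
        then show "j mod C = (p + b) mod C" by (simp add: nat_mod_eq_int)
      qed
      have fY: "\<forall>j. coeff f j \<noteq> 0 \<longrightarrow> j \<in> Yv (wadd (wadd w z) i)"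
        unfolding f_def using rho_supp[OF F] by blast
      have hYt: "\<forall>j. coeff (h * q) j \<noteq> 0 \<longrightarrow> j \<in> Yv (wadd (wadd w z) i)"
        if qB: "\<forall>j. coeff q j \<noteq> 0 \<longrightarrow> j \<in> Yv (wadd w i)" for q
      proof -
        obtain Q where Q: "Q \<in> Rw n xi (wadd w i)" "rho y Q = q" using rho_lift[OF qB] by blast
        have HQ: "H * Q \<in> Rw n xi (wadd (wadd w z) i)" using Rw_mult[OF H Q(1)] by (simp only: wadd_perm)
        have e: "rho y (H * Q) = h * q" using Q by (simp add: rho_mult h_def)
        show ?thesis
        proof (intro allI impI)
          fix j assume "coeff (h * q) j \<noteq> 0"
          then have "coeff (rho y (H * Q)) j \<noteq> 0" using e by simp
          then show "j \<in> Yv (wadd (wadd w z) i)" by (rule rho_supp[OF HQ])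
        qed
      qed
      have hD: "\<forall>j\<in>Yv (wadd (wadd w z) i). degree g \<le> j \<longrightarrow> j - degree g \<in> Yv (wadd z i)"
      proof (intro ballI impI)
        fix j assume j0: "j \<in> Yv (wadd (wadd w z) i)" and jd: "degree g \<le> j"
        have j1: "j \<in> Yv (wadd w (wadd z i))" using j0 by (simp only: wadd_assoc)
        have "j - d \<in> Yv (wadd z i)" by (rule Y_sub[OF j1 w_eq[symmetric]]) (use jd dg in simp)
        then show "j - degree g \<in> Yv (wadd z i)" using dg by simp
      qed
      have hA: "\<forall>j\<in>Yv (wadd z i). \<forall>j'. j' \<le> j \<longrightarrow> j' mod C = j mod C \<longrightarrow> j' \<in> Yv (wadd z i)"
        using Y_down by blast
      obtain a bb where ab: "\<forall>j. coeff a j \<noteq> 0 \<longrightarrow> j \<in> Yv (wadd z i)"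
          "\<forall>j. coeff bb j \<noteq> 0 \<longrightarrow> j \<in> Yv (wadd w i)" "f = g * a + h * bb"
        using core[OF C_pos lg dpos bez gcl hcl fcl fY hB hYt hD hA] by blast
      obtain A where A: "A \<in> Rw n xi (wadd z i)" "rho y A = a" using rho_lift[OF ab(1)] by blast
      obtain B where B: "B \<in> Rw n xi (wadd w i)" "rho y B = bb" using rho_lift[OF ab(2)] by blast
      have "G * A \<in> Rw n xi (wadd (wadd w z) i)" using Rw_mult[OF G A(1)] by (simp add: wadd_assoc)
      moreover have "H * B \<in> Rw n xi (wadd (wadd w z) i)" using Rw_mult[OF H B(1)] by (simp add: wadd_perm)
      ultimately have GAHB: "G * A + H * B \<in> Rw n xi (wadd (wadd w z) i)" by (rule Rw_add)
      have "rho y F = rho y (G * A + H * B)"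
        using ab(3) A B by (simp add: rho_add rho_mult f_def g_def h_def)
      then have "F = G * A + H * B" by (rule rho_inj[OF F GAHB])
      then show ?thesis using A(1) B(1) by blast
    qed
  qed
qed

end


lemma rvec_nth [simp]: "rvec v $ j = real_of_int (v $ j)"
  by (simp add: rvec_def)

lemma rvec_inj: "rvec a = rvec b \<Longrightarrow> a = b"
  by (simp add: vec_eq_iff)

lemma rvec_inner: "rvec a \<bullet> rvec b = real_of_int (iinner a b)"
  by (simp add: inner_vec_def iinner_def)

lemma iinner_commute: "iinner a b = iinner b a"
  by (simp add: iinner_def mult.commute)

lemma int_prop:
  fixes u c :: "int ^ 'm::finite"
  assumes prim: "primitive_lattice c" and cj0: "c $ j0 \<noteq> 0"
    and rel: "\<And>j. u $ j * c $ j0 = u $ j0 * c $ j"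
  shows "\<exists>t. u = t *s c"
proof -
  define a where "a = u $ j0"
  define b where "b = c $ j0"
  define g where "g = gcd a b"
  have g0: "g \<noteq> 0" using cj0 by (simp add: g_def b_def)
  define a' where "a' = a div g"
  define b' where "b' = b div g"
  have aa: "a = g * a'" unfolding a'_def g_def by simp
  have bb: "b = g * b'" unfolding b'_def g_def by simp
  have cop: "coprime a' b'" unfolding a'_def b'_def g_def using cj0 b_def by (intro div_gcd_coprime) simp
  have rel': "u $ j * b' = a' * c $ j" for j
  proof -
    have "g * (u $ j * b') = g * (a' * c $ j)"
      using rel[of j] aa bb by (simp add: a_def b_def algebra_simps)
    then show ?thesis using g0 by simp
  qed
  have bdv: "b' dvd c $ j" for j
  proof -
    have "b' dvd a' * c $ j" using rel'[of j] by (metis dvd_triv_right)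
    then show ?thesis using cop by (simp add: coprime_commute coprime_dvd_mult_right_iff)
  qed
  have pr: "\<forall>k. (\<forall>j. k dvd c $ j) \<longrightarrow> is_unit k" using prim by (simp add: primitive_lattice_def)
  have "(\<forall>j. b' dvd c $ j) \<longrightarrow> is_unit b'" by (rule spec[OF pr])
  then have "is_unit b'" using bdv by simp
  then have "\<bar>b'\<bar> = 1" by (simp only: zdvd1_eq)
  then have "b' = 1 \<or> b' = -1" by arith
  then have b'1: "b' * b' = 1" by auto
  have "u $ j = (a' * b') * c $ j" for j
  proof -
    have "u $ j = u $ j * (b' * b')" using b'1 by simp
    also have "\<dots> = (u $ j * b') * b'" by (simp add: algebra_simps)
    also have "\<dots> = (a' * b') * c $ j" using rel'[of j] by (simp add: algebra_simps)
    finally show ?thesis .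
  qed
  then show ?thesis by (intro exI[of _ "a' * b'"]) (simp add: vec_eq_iff)
qed

lemma ker_lemma:
  fixes xi :: "nat \<Rightarrow> int ^ 'm::finite" and c u :: "int ^ 'm"
  assumes n_def: "n = CARD('m) - 1"
    and xi_inj: "inj_on xi {..<n}"
    and xi_indep: "independent ((\<lambda>i. rvec (xi i)) ` {..<n})"
    and xi_orth: "\<forall>i<n. iinner (xi i) c = 0"
    and prim: "primitive_lattice c"
    and uo: "\<And>i. i < n \<Longrightarrow> iinner (xi i) u = 0"
  shows "\<exists>t. u = t *s c"
proof -
  define S where "S = (\<lambda>i. rvec (xi i)) ` {..<n}"
  have cardS: "card S = n" unfolding S_def
    by (subst card_image) (auto intro!: inj_onI dest: rvec_inj inj_onD[OF xi_inj])
  define W where "W = {v \<in> UNIV. \<forall>x \<in> span S. orthogonal x v}"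
  have "dim W + dim (span S) = dim (UNIV :: (real ^ 'm) set)"
    unfolding W_def by (rule dim_subspace_orthogonal_to_vectors) (auto simp: subspace_span)
  moreover have "dim (span S) = n" using xi_indep cardS unfolding S_def
    by (simp add: dim_eq_card_independent)
  moreover have "dim (UNIV :: (real ^ 'm) set) = CARD('m)" by simp
  moreover have "0 < CARD('m)" by simp
  ultimately have dW: "dim W = 1" using n_def by linarith
  have inW: "rvec v \<in> W" if vo: "\<And>i. i < n \<Longrightarrow> iinner (xi i) v = 0" for v
  proof -
    have "orthogonal x (rvec v)" if x: "x \<in> span S" for x
    proof -
      have "orthogonal (rvec v) x"
      proof (rule orthogonal_to_span[OF x])
        fix s assume "s \<in> S"
        then obtain i where i: "i < n" "s = rvec (xi i)" unfolding S_def by blast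
        show "orthogonal (rvec v) s" unfolding orthogonal_def i(2)
          using vo[OF i(1)] by (simp add: rvec_inner iinner_commute)
      qed
      then show ?thesis by (simp add: orthogonal_commute)
    qed
    then show ?thesis by (simp add: W_def)
  qed
  have cW: "rvec c \<in> W" using xi_orth by (intro inW) simp
  have uW: "rvec u \<in> W" using uo by (intro inW) simp
  have c0: "rvec c \<noteq> 0"
  proof
    assume "rvec c = 0"
    then have "c = 0" by (simp add: vec_eq_iff)
    then show False using prim by (simp add: primitive_lattice_def)
  qed
  have "rvec u \<in> span {rvec c}"
  proof (rule ccontr)
    assume nu: "rvec u \<notin> span {rvec c}"
    have ic: "independent {rvec c}" using c0 by (intro independent_insertI) (auto simp: independent_empty)
    have iuc: "independent {rvec u, rvec c}" by (rule independent_insertI[OF nu ic])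
    have "rvec u \<noteq> rvec c" using nu by (metis span_base singletonI)
    then have "card {rvec u, rvec c} = 2" by simp
    moreover have "card {rvec u, rvec c} \<le> dim W"
      by (rule independent_card_le_dim) (use cW uW iuc in auto)
    ultimately show False using dW by simp
  qed
  then obtain l where l: "rvec u = l *\<^sub>R rvec c" by (auto simp: span_singleton)
  have "\<exists>j. rvec c $ j \<noteq> 0" using c0 by (simp add: vec_eq_iff)
  then obtain j0 where "rvec c $ j0 \<noteq> 0" by blast
  then have j0: "c $ j0 \<noteq> 0" by simp
  show ?thesis
  proof (rule int_prop[OF prim j0])
    fix j
    have "real_of_int (u $ j) = l * real_of_int (c $ j)" "real_of_int (u $ j0) = l * real_of_int (c $ j0)"
      using arg_cong[OF l, of "\<lambda>x. x $ j"] arg_cong[OF l, of "\<lambda>x. x $ j0"] by simp_all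
    then have "real_of_int (u $ j * c $ j0) = real_of_int (u $ j0 * c $ j)" by simp
    then show "u $ j * c $ j0 = u $ j0 * c $ j" by (rule of_int_eq_iff[THEN iffD1])
  qed
qed


theorem lemma2p7:
  fixes \<Delta> E :: "(real ^ 'm::finite) set"
    and y :: 'm and n :: nat
    and c :: "int ^ 'm" and \<xi> :: "nat \<Rightarrow> int ^ 'm"
    and G H :: "('m \<Rightarrow>\<^sub>0 nat) \<Rightarrow>\<^sub>0 'k::field"
    and w z :: "nat \<Rightarrow> int"
  assumes n_def: "n = CARD('m) - 1"
    and newton: "newton_polyhedron \<Delta>"
    and loose: "loose_edge \<Delta> E"
    and desc: "descendant y E"
    and c_prim: "primitive_lattice c"
    and c_par: "parallel_to E (rvec c)"
    and xi_nonneg: "\<forall>i<n. \<forall>j. 0 \<le> \<xi> i $ j"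
    and xi_inj: "inj_on \<xi> {..<n}"
    and xi_indep: "independent ((\<lambda>i. rvec (\<xi> i)) ` {..<n})"
    and xi_orth: "\<forall>i<n. iinner (\<xi> i) c = 0"
    and w: "w \<in> nonneg_weights n" and z: "z \<in> nonneg_weights n"
    and G: "G \<in> Rw n \<xi> w" and H: "H \<in> Rw n \<xi> z"
    and cop: "coprime_poly G H"
    and monic: "monic_in y G"
  shows "\<forall>i\<in>Mset n \<xi> c.
           {G * A + H * B | A B. A \<in> Rw n \<xi> (wadd z i) \<and> B \<in> Rw n \<xi> (wadd w i)}
             = Rw n \<xi> (wadd (wadd w z) i)"
proof -
  have ad: "aff_dim E = 1" using loose by (simp add: loose_edge_def)
  have "\<not> (\<forall>a\<in>E. \<forall>b\<in>E. a = b)"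
  proof
    assume all: "\<forall>a\<in>E. \<forall>b\<in>E. a = b"
    show False
    proof (cases "E = {}")
      case True then show False using ad by simp
    next
      case False
      then obtain a where a: "a \<in> E" by blast
      then have "E = {a}" using all by blast
      then show False using ad by simp
    qed
  qed
  then obtain a b where ab: "a \<in> E" "b \<in> E" "a \<noteq> b" by blast
  obtain d0 where d0: "parallel_to E d0" "\<forall>j. j \<noteq> y \<longrightarrow> 0 \<le> d0 $ j" "d0 $ y < 0"
    using desc unfolding descendant_def by blast
  obtain t1 where t1: "b - a = t1 *\<^sub>R d0" using d0(1) ab(1,2) unfolding parallel_to_def by blast
  obtain t2 where t2: "b - a = t2 *\<^sub>R rvec c" using c_par ab(1,2) unfolding parallel_to_def by blast
  have ba: "b - a \<noteq> 0" using ab by simp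
  have t2nz: "t2 \<noteq> 0" using t2 ba by auto
  have t1nz: "t1 \<noteq> 0" using t1 ba by auto
  define lam where "lam = t1 / t2"
  have lam0: "lam \<noteq> 0" using t1nz t2nz by (simp add: lam_def)
  have rc: "rvec c = lam *\<^sub>R d0"
  proof -
    have "rvec c = (1 / t2) *\<^sub>R (t2 *\<^sub>R rvec c)" using t2nz by simp
    also have "\<dots> = (1 / t2) *\<^sub>R (t1 *\<^sub>R d0)" using t1 t2 by simp
    also have "\<dots> = lam *\<^sub>R d0" by (simp add: lam_def)
    finally show ?thesis .
  qed
  have rcj: "real_of_int (c $ j) = lam * d0 $ j" for j
    using arg_cong[OF rc, of "\<lambda>x. x $ j"] by simp
  define s :: int where "s = (if c $ y < 0 then 1 else -1)"
  define c' where "c' = s *s c"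
  have ss: "s * s = 1" by (simp add: s_def)
  have cc': "c = s *s c'" unfolding c'_def using ss by (simp add: vec_eq_iff mult.assoc[symmetric])
  have c'prop: "c' $ y < 0 \<and> (\<forall>k. k \<noteq> y \<longrightarrow> 0 \<le> c' $ k)"
  proof (cases "lam > 0")
    case True
    have "real_of_int (c $ y) < 0" using rcj[of y] True d0(3) by (simp add: mult_pos_neg)
    then have cy: "c $ y < 0" by simp
    have "0 \<le> c $ k" if "k \<noteq> y" for k
    proof -
      have "0 \<le> lam * d0 $ k" using True d0(2) that by simp
      then show ?thesis using rcj[of k] by simp
    qed
    then show ?thesis using cy by (simp add: c'_def s_def)
  next
    case False
    then have ln: "lam < 0" using lam0 by simp
    have "0 < real_of_int (c $ y)" using rcj[of y] ln d0(3) by (simp add: mult_neg_neg)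
    then have cy: "\<not> c $ y < 0" "0 < c $ y" by simp_all
    have "c $ k \<le> 0" if "k \<noteq> y" for k
    proof -
      have "lam * d0 $ k \<le> 0" using ln d0(2) that by (simp add: mult_nonpos_nonneg)
      then show ?thesis using rcj[of k] by simp
    qed
    then show ?thesis using cy by (simp add: c'_def s_def)
  qed
  have orth': "\<And>i. i < n \<Longrightarrow> iinner (\<xi> i) c' = 0"
    using xi_orth by (simp add: c'_def iinner_smult)
  have ker': "\<exists>t::int. u = t *s c'" if uo: "\<And>i. i < n \<Longrightarrow> iinner (\<xi> i) u = 0" for u
  proof -
    obtain t where "u = t *s c" using ker_lemma[OF n_def xi_inj xi_indep xi_orth c_prim uo] by blast
    then have "u = (t * s) *s c'" using cc' by (simp add: vec_eq_iff mult.assoc)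
    then show ?thesis by blast
  qed
  interpret L n \<xi> y c'
  proof
    show "c' $ y < 0" using c'prop by blast
    show "\<And>k. k \<noteq> y \<Longrightarrow> 0 \<le> c' $ k" using c'prop by blast
    show "\<And>i. i < n \<Longrightarrow> iinner (\<xi> i) c' = 0" by (rule orth')
    show "\<And>u. (\<And>i. i < n \<Longrightarrow> iinner (\<xi> i) u = 0) \<Longrightarrow> \<exists>t. u = t *s c'" by (rule ker')
  qed
  show ?thesis
  proof
    fix i assume i: "i \<in> Mset n \<xi> c"
    then obtain \<gamma> where gam: "weight n \<xi> \<gamma> = i"
      and eta: "\<forall>\<eta>\<in>nonneg_orthant. \<eta> \<bullet> rvec c = 0 \<longrightarrow> 0 \<le> \<eta> \<bullet> rvec \<gamma>"
      unfolding Mset_def by blast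
    have gamc: "0 \<le> int C * \<gamma> $ k + c' $ k * \<gamma> $ y" if k: "k \<noteq> y" for k
    proof -
      have c'k: "0 \<le> c' $ k" using c'prop k by blast
      define \<eta> :: "real ^ 'm" where "\<eta> = real C *\<^sub>R axis k 1 + real_of_int (c' $ k) *\<^sub>R axis y 1"
      have \<eta>j: "\<eta> $ j = (if j = k then real C else 0) + (if j = y then real_of_int (c' $ k) else 0)" for j
        by (simp add: \<eta>_def axis_def)
      have "\<eta> \<in> nonneg_orthant" using c'k by (simp add: nonneg_orthant_def \<eta>j)
      have inn: "\<eta> \<bullet> rvec v = real C * real_of_int (v $ k) + real_of_int (c' $ k) * real_of_int (v $ y)" for v
        by (simp add: \<eta>_def inner_add_left inner_axis')
      have "\<eta> \<bullet> rvec c = real_of_int s * (real_of_int (c' $ k) * (real C + real_of_int (c' $ y)))"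
        unfolding inn using cc' by (simp add: algebra_simps)
      also have "real C + real_of_int (c' $ y) = 0" using C_int by linarith
      finally have "\<eta> \<bullet> rvec c = 0" by simp
      then have "0 \<le> \<eta> \<bullet> rvec \<gamma>" using eta \<open>\<eta> \<in> nonneg_orthant\<close> by blast
      then have "0 \<le> real_of_int (int C * \<gamma> $ k + c' $ k * \<gamma> $ y)" unfolding inn by simp
      then show ?thesis by linarith
    qed
    show "{G * A + H * B | A B. A \<in> Rw n \<xi> (wadd z i) \<and> B \<in> Rw n \<xi> (wadd w i)}
             = Rw n \<xi> (wadd (wadd w z) i)"
      by (rule main_L[OF G H cop monic gam gamc])
  qed
qed


end
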